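(* The Laplacian on an infinite, connected, locally finite weighted graph $\Gamma$ is surjective onto $\mathbb{R}^\Gamma$. Consequently, the Laplacian on a locally finite weighted graph $\Gamma$ is surjective onto $\mathbb{R}^\Gamma$ if and only if every connected component of $\Gamma$ is infinite.
   Context: A weighted graph is an undirected graph without loops or multiple edges in which each edge $xy$ carries a weight $\omega_{xy}=\omega_{yx}>0$; the degree of a vertex is $\deg x=\sum_{y\sim x}\omega_{xy}$. The Laplacian is the linear map $\Delta:\mathbb{R}^\Gamma\to\mathbb{R}^\Gamma$, $\Delta f(x)=f(x)-\frac{1}{\deg x}\sum_{y\sim x}\omega_{xy}f(y)$, where $\mathbb{R}^\Gamma$ is the space of all real functions on the vertex set. *)

theory Defs
  imports Complex_Main
begin

definition weighted_graph :: "('a \<Rightarrow> 'a \<Rightarrow> real) \<Rightarrow> bool" where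
  "weighted_graph w \<longleftrightarrow>
     (\<forall>x y. w x y = w y x) \<and> (\<forall>x y. 0 \<le> w x y) \<and> (\<forall>x. w x x = 0)"

definition adj :: "('a \<Rightarrow> 'a \<Rightarrow> real) \<Rightarrow> 'a \<Rightarrow> 'a \<Rightarrow> bool" where
  "adj w x y \<longleftrightarrow> 0 < w x y"

definition neighbors :: "('a \<Rightarrow> 'a \<Rightarrow> real) \<Rightarrow> 'a \<Rightarrow> 'a set" where
  "neighbors w x = {y. adj w x y}"

definition locally_finite :: "('a \<Rightarrow> 'a \<Rightarrow> real) \<Rightarrow> bool" where
  "locally_finite w \<longleftrightarrow> (\<forall>x. finite (neighbors w x))"

definition deg :: "('a \<Rightarrow> 'a \<Rightarrow> real) \<Rightarrow> 'a \<Rightarrow> real" where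
  "deg w x = (\<Sum>y\<in>neighbors w x. w x y)"

definition laplacian :: "('a \<Rightarrow> 'a \<Rightarrow> real) \<Rightarrow> ('a \<Rightarrow> real) \<Rightarrow> 'a \<Rightarrow> real" where
  "laplacian w f x = f x - (1 / deg w x) * (\<Sum>y\<in>neighbors w x. w x y * f y)"

definition reachable :: "('a \<Rightarrow> 'a \<Rightarrow> real) \<Rightarrow> 'a \<Rightarrow> 'a \<Rightarrow> bool" where
  "reachable w = (adj w)\<^sup>*\<^sup>*"

definition connected_graph :: "('a \<Rightarrow> 'a \<Rightarrow> real) \<Rightarrow> bool" where
  "connected_graph w \<longleftrightarrow> (\<forall>x y. reachable w x y)"

definition component :: "('a \<Rightarrow> 'a \<Rightarrow> real) \<Rightarrow> 'a \<Rightarrow> 'a set" where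
  "component w x = {y. reachable w x y}"

end

theory Submission
  imports Defs "HOL-Library.Function_Algebras"
begin


definition scl :: "real \<Rightarrow> ('a \<Rightarrow> real) \<Rightarrow> ('a \<Rightarrow> real)" where
  "scl c f = (\<lambda>x. c * f x)"

interpretation V: vector_space "scl :: real \<Rightarrow> ('a \<Rightarrow> real) \<Rightarrow> 'a \<Rightarrow> real"
  by unfold_locales (auto simp: scl_def fun_eq_iff algebra_simps)

definition supp :: "'a set \<Rightarrow> ('a \<Rightarrow> real) set" where
  "supp W = {f. \<forall>x. x \<notin> W \<longrightarrow> f x = 0}"

definition delta :: "'a \<Rightarrow> 'a \<Rightarrow> real" where
  "delta b = (\<lambda>x. if x = b then 1 else 0)"

lemma subspace_supp: "V.subspace (supp W)"
  by (auto simp: V.subspace_def supp_def scl_def)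

lemma sum_fun_apply: "finite S \<Longrightarrow> (\<Sum>i\<in>S. F i) x = (\<Sum>i\<in>S. (F i x :: real))"
  by (induction S rule: finite_induct) auto

lemma supp_span:
  assumes "finite W" shows "supp W \<subseteq> V.span (delta ` W)"
proof
  fix f :: "'a \<Rightarrow> real" assume f: "f \<in> supp W"
  have eq: "f = (\<Sum>b\<in>W. scl (f b) (delta b))"
  proof
    fix x
    have "(\<Sum>b\<in>W. scl (f b) (delta b)) x = (\<Sum>b\<in>W. f b * delta b x)"
      using assms by (simp add: sum_fun_apply scl_def)
    also have "\<dots> = (if x \<in> W then f x else 0)"
      using assms by (simp add: delta_def if_distrib cong: if_cong)
    also have "\<dots> = f x" using f by (auto simp: supp_def)
    finally show "f x = (\<Sum>b\<in>W. scl (f b) (delta b)) x" by simp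
  qed
  show "f \<in> V.span (delta ` W)"
    by (subst eq) (intro V.span_sum V.span_scale V.span_base, auto)
qed

lemma basis_fin:
  assumes W: "finite W" and T: "T \<subseteq> supp W"
  obtains B where "B \<subseteq> T" "V.independent B" "T \<subseteq> V.span B" "card B = V.dim T" "finite B"
proof -
  obtain B where B: "B \<subseteq> T" "V.independent B" "T \<subseteq> V.span B" "card B = V.dim T"
    by (rule V.basis_exists)
  have "B \<subseteq> V.span (delta ` W)" using B(1) T supp_span[OF W] by blast
  then have "finite B" using V.independent_span_bound[OF finite_imageI[OF W] B(2)] by blast
  with B that show ?thesis by blast
qed

lemma ind_le_dim:
  assumes W: "finite W" and T: "T \<subseteq> supp W" and C: "V.independent C" "C \<subseteq> T"
  shows "finite C \<and> card C \<le> V.dim T"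
proof -
  obtain B where B: "B \<subseteq> T" "V.independent B" "T \<subseteq> V.span B" "card B = V.dim T" "finite B"
    using basis_fin[OF W T] .
  have "C \<subseteq> V.span B" using C(2) B(3) by blast
  from V.independent_span_bound[OF B(5) C(1) this] have "finite C \<and> card C \<le> card B" .
  then show ?thesis using B(4) by simp
qed

lemma dim_mono_supp:
  assumes W: "finite W" and T: "T \<subseteq> supp W" and ST: "S \<subseteq> T"
  shows "V.dim S \<le> V.dim T"
proof -
  have S: "S \<subseteq> supp W" using ST T by blast
  obtain B where B: "B \<subseteq> S" "V.independent B" "S \<subseteq> V.span B" "card B = V.dim S" "finite B"
    using basis_fin[OF W S] .
  have "B \<subseteq> T" using B(1) ST by blast
  then show ?thesis using ind_le_dim[OF W T B(2)] B(4) by simp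
qed

lemma dim_eq_sub:
  assumes W: "finite W" and T: "T \<subseteq> supp W" and ST: "S \<subseteq> T" and sub: "V.subspace S"
    and d: "V.dim T \<le> V.dim S"
  shows "T \<subseteq> S"
proof
  fix v assume v: "v \<in> T"
  show "v \<in> S"
  proof (rule ccontr)
    assume nv: "v \<notin> S"
    have S: "S \<subseteq> supp W" using ST T by blast
    obtain B where B: "B \<subseteq> S" "V.independent B" "S \<subseteq> V.span B" "card B = V.dim S" "finite B"
      using basis_fin[OF W S] .
    have "V.span B \<subseteq> S" using V.span_minimal[OF B(1) sub] .
    with nv have vB: "v \<notin> V.span B" by blast
    then have vB': "v \<notin> B" using V.span_base by blast
    have ind: "V.independent (insert v B)" using V.independent_insertI[OF vB B(2)] .
    have "insert v B \<subseteq> T" using v B(1) ST by blast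
    then have "card (insert v B) \<le> V.dim T" using ind_le_dim[OF W T ind] by blast
    moreover have "card (insert v B) = Suc (card B)" using card_insert_disjoint[OF B(5) vB'] .
    ultimately show False using B(4) d by simp
  qed
qed

lemma stabilize:
  fixes K :: "nat \<Rightarrow> ('a \<Rightarrow> real) set"
  assumes "finite W" "\<And>n. K n \<subseteq> supp W" "\<And>n. V.subspace (K n)"
    and "\<And>m n. m \<le> n \<Longrightarrow> K n \<subseteq> K m"
  shows "\<exists>N. \<forall>m\<ge>N. K m = K N"
proof -
  define d where "d = (LEAST d. \<exists>n. V.dim (K n) = d)"
  obtain N where N: "V.dim (K N) = d"
    using LeastI_ex[of "\<lambda>d. \<exists>n. V.dim (K n) = d"] unfolding d_def by blast
  have dle: "d \<le> V.dim (K m)" for m unfolding d_def by (rule Least_le) blast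
  show ?thesis
  proof (intro exI allI impI)
    fix m assume "N \<le> m"
    then have sub: "K m \<subseteq> K N" using assms(4) by blast
    have "V.dim (K N) \<le> V.dim (K m)" using N dle by simp
    then have "K N \<subseteq> K m" using dim_eq_sub[OF assms(1,2) sub assms(3)] by blast
    with sub show "K m = K N" by blast
  qed
qed

lemma inj_surj_supp:
  fixes L :: "('a \<Rightarrow> real) \<Rightarrow> ('a \<Rightarrow> real)"
  assumes W: "finite W"
    and add: "\<And>f g. L (f + g) = L f + L g"
    and hom: "\<And>c f. L (scl c f) = scl c (L f)"
    and into: "\<And>f. f \<in> supp W \<Longrightarrow> L f \<in> supp W"
    and inj: "\<And>f. f \<in> supp W \<Longrightarrow> L f = 0 \<Longrightarrow> f = 0"
  shows "supp W \<subseteq> L ` supp W"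
proof -
  interpret LH: module_hom scl scl L
    by (unfold module_hom_iff) (auto simp: add hom V.module_axioms)
  have sub: "V.subspace (L ` supp W)"
    using LH.subspace_image[OF subspace_supp] .
  obtain B where B: "B \<subseteq> supp W" "V.independent B" "supp W \<subseteq> V.span B" "card B = V.dim (supp W)" "finite B"
    using basis_fin[OF W] by blast
  have spB: "V.span B \<subseteq> supp W" using B subspace_supp V.span_minimal by blast
  have injon: "inj_on L (supp W)"
    using LH.inj_on_iff_eq_0[OF subspace_supp] inj by blast
  have injB: "inj_on L (V.span B)" using inj_on_subset[OF injon spB] .
  have indL: "V.independent (L ` B)"
    using LH.independent_injective_image[OF B(2) injB] .
  have cardL: "card (L ` B) = card B"
    using card_image inj_on_subset[OF injB V.span_superset] by blast
  have i1: "L ` supp W \<subseteq> supp W" using into by blast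
  have i2: "L ` B \<subseteq> L ` supp W" using B by blast
  have "V.dim (supp W) \<le> V.dim (L ` supp W)"
    using ind_le_dim[OF W i1 indL i2] B cardL by auto
  then show ?thesis
    using dim_eq_sub[OF W _ _ sub] into by blast
qed



definition lop :: "('a \<Rightarrow> 'a \<Rightarrow> real) \<Rightarrow> ('a \<Rightarrow> real) \<Rightarrow> 'a \<Rightarrow> real" where
  "lop w f x = deg w x * f x - (\<Sum>y\<in>neighbors w x. w x y * f y)"

primrec gball :: "('a \<Rightarrow> 'a \<Rightarrow> real) \<Rightarrow> 'a \<Rightarrow> nat \<Rightarrow> 'a set" where
  "gball w x0 0 = {x0}"
| "gball w x0 (Suc n) = gball w x0 n \<union> (\<Union>y\<in>gball w x0 n. neighbors w y)"

locale wg =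
  fixes w :: "'a \<Rightarrow> 'a \<Rightarrow> real"
  assumes wg: "weighted_graph w" and lf: "locally_finite w" and ne: "\<forall>x. neighbors w x \<noteq> {}"
begin

lemma wsym: "w x y = w y x" using wg by (simp add: weighted_graph_def)
lemma wnn: "0 \<le> w x y" using wg by (simp add: weighted_graph_def)
lemma fin: "finite (neighbors w x)" using lf by (simp add: locally_finite_def)
lemma nb: "y \<in> neighbors w x \<longleftrightarrow> 0 < w x y" by (simp add: neighbors_def adj_def)
lemma adj_nb: "adj w x y \<longleftrightarrow> y \<in> neighbors w x" by (simp add: neighbors_def)
lemma adj_sym: "adj w x y \<Longrightarrow> adj w y x" using wsym by (simp add: adj_def)

lemma deg_pos: "0 < deg w x"
  unfolding deg_def using fin ne by (intro sum_pos) (auto simp: nb)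

lemma lap_lop: "laplacian w f x = lop w f x / deg w x"
  using deg_pos[of x] by (simp add: laplacian_def lop_def field_simps)

lemma lop_local:
  assumes "\<And>y. y \<in> insert x (neighbors w x) \<Longrightarrow> f y = g y"
  shows "lop w f x = lop w g x"
  unfolding lop_def using assms by (auto intro!: sum.cong)

lemma lop_add: "lop w (f + g) x = lop w f x + lop w g x"
  by (simp add: lop_def algebra_simps sum.distrib)
lemma lop_diff: "lop w (f - g) x = lop w f x - lop w g x"
  by (simp add: lop_def algebra_simps sum_subtractf)
lemma lop_scl: "lop w (scl c f) x = c * lop w f x"
  by (simp add: lop_def scl_def algebra_simps sum_distrib_left)
lemma lop_scl': "lop w (\<lambda>x. c * f x) x = c * lop w f x"
  using lop_scl[of c f x] by (simp add: scl_def)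
lemma lop_uminus: "lop w (- f) x = - lop w f x"
  by (simp add: lop_def sum_negf algebra_simps)
lemma lop_zero: "lop w 0 x = 0"
  by (simp add: lop_def)

lemma reach_sym: "reachable w x y \<Longrightarrow> reachable w y x"
  unfolding reachable_def
proof (induction rule: rtranclp_induct)
  case base then show ?case by simp
next
  case (step y z) then show ?case
    by (meson adj_sym converse_rtranclp_into_rtranclp)
qed

lemma reach_trans: "reachable w x y \<Longrightarrow> reachable w y z \<Longrightarrow> reachable w x z"
  unfolding reachable_def by simp

lemma reach_step: "reachable w x y \<Longrightarrow> z \<in> neighbors w y \<Longrightarrow> reachable w x z"
  unfolding reachable_def by (simp add: adj_nb rtranclp.rtrancl_into_rtrancl)

lemma comp_eq: "y \<in> neighbors w x \<Longrightarrow> component w y = component w x"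
proof -
  assume y: "y \<in> neighbors w x"
  have xy: "reachable w x y" using reach_step[of x x y] y by (simp add: reachable_def)
  show ?thesis unfolding component_def
    using reach_trans[OF xy] reach_trans[OF reach_sym[OF xy]] by blast
qed

lemma maxp:
  assumes A: "finite A" and esc: "\<forall>a\<in>A. \<exists>z. z \<notin> A \<and> reachable w a z"
    and out: "\<And>x. x \<notin> A \<Longrightarrow> f x = 0" and harm: "\<And>x. x \<in> A \<Longrightarrow> lop w f x = 0"
  shows "f x \<le> 0"
proof (rule ccontr)
  assume "\<not> f x \<le> 0"
  then have fx: "f x > 0" by simp
  have xA: "x \<in> A"
  proof (rule ccontr)
    assume "x \<notin> A" then have "f x = 0" by (rule out)
    with fx show False by simp
  qed
  define M where "M = Max (f ` A)"
  have fM: "f y \<le> M" if "y \<in> A" for y unfolding M_def using A that by simp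
  have "M \<ge> f x" using fM xA .
  then have Mpos: "M > 0" using fx by simp
  have fle: "f y \<le> M" for y
  proof (cases "y \<in> A")
    case True then show ?thesis by (rule fM)
  next
    case False then have "f y = 0" by (rule out)
    then show ?thesis using Mpos by simp
  qed
  have "M \<in> f ` A" unfolding M_def using A xA by (intro Max_in) auto
  then obtain a where aA: "a \<in> A" and fa: "f a = M" by blast
  have prp: "f z' = M" if fz: "f z = M" and z': "z' \<in> neighbors w z" for z z'
  proof -
    have zA: "z \<in> A"
    proof (rule ccontr)
      assume "z \<notin> A" then have "f z = 0" by (rule out)
      with fz Mpos show False by simp
    qed
    have eq: "(\<Sum>y\<in>neighbors w z. w z y * (M - f y))
        = (\<Sum>y\<in>neighbors w z. w z y) * M - (\<Sum>y\<in>neighbors w z. w z y * f y)"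
      by (simp only: right_diff_distrib sum_subtractf sum_distrib_right)
    have "lop w f z = (\<Sum>y\<in>neighbors w z. w z y) * M - (\<Sum>y\<in>neighbors w z. w z y * f y)"
      unfolding lop_def deg_def fz by (simp only: mult.commute)
    then have sum0: "(\<Sum>y\<in>neighbors w z. w z y * (M - f y)) = 0"
      using harm[OF zA] eq by simp
    have nn: "\<And>y. y \<in> neighbors w z \<Longrightarrow> 0 \<le> w z y * (M - f y)"
      using wnn fle by simp
    have iff: "((\<Sum>y\<in>neighbors w z. w z y * (M - f y)) = 0) = (\<forall>y\<in>neighbors w z. w z y * (M - f y) = 0)"
      by (rule sum_nonneg_eq_0_iff[OF fin]) (rule nn)
    have "\<forall>y\<in>neighbors w z. w z y * (M - f y) = 0"
      using iff[THEN iffD1, OF sum0] .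
    then have "w z z' * (M - f z') = 0" using z' by blast
    moreover have "w z z' > 0" using z' nb by blast
    ultimately show ?thesis by simp
  qed
  have reachM: "f z = M" if "reachable w a z" for z
    using that unfolding reachable_def
  proof (induction rule: rtranclp_induct)
    case base then show ?case using fa by simp
  next
    case (step y z) then show ?case using prp adj_nb by blast
  qed
  obtain z where z: "z \<notin> A" "reachable w a z" using esc aA by blast
  have "f z = M" using reachM[OF z(2)] .
  moreover have "f z = 0" using out[OF z(1)] .
  ultimately show False using Mpos by simp
qed

lemma finite_solve:
  assumes A: "finite A" and esc: "\<forall>a\<in>A. \<exists>z. z \<notin> A \<and> reachable w a z"
  shows "\<exists>f. \<forall>x\<in>A. lop w f x = h x"
proof -
  define L where "L f = (\<lambda>x. if x \<in> A then lop w f x else 0)" for f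
  have add: "L (f + g) = L f + L g" for f g
    unfolding L_def by (rule ext) (simp add: lop_add)
  have hom: "L (scl c f) = scl c (L f)" for c f
    unfolding L_def by (rule ext) (simp add: lop_scl' scl_def)
  have into: "L f \<in> supp A" for f unfolding L_def supp_def by simp
  have inj: "f = 0" if f: "f \<in> supp A" "L f = 0" for f
  proof -
    have out: "\<And>x. x \<notin> A \<Longrightarrow> f x = 0" using f(1) unfolding supp_def by blast
    have harm: "lop w f x = 0" if x: "x \<in> A" for x
    proof -
      have "L f x = 0" using f(2) by simp
      then show ?thesis using x unfolding L_def by simp
    qed
    have out': "\<And>x. x \<notin> A \<Longrightarrow> (- f) x = 0" using out by simp
    have harm': "\<And>x. x \<in> A \<Longrightarrow> lop w (- f) x = 0"
      using harm lop_uminus by simp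
    have le1: "f x \<le> 0" for x using maxp[OF A esc out harm] .
    have le2: "(- f) x \<le> 0" for x using maxp[OF A esc out' harm'] .
    show "f = 0"
    proof (rule ext)
      fix x show "f x = 0 x" using le1[of x] le2[of x] by simp
    qed
  qed
  have hs: "(\<lambda>x. if x \<in> A then h x else 0) \<in> supp A" unfolding supp_def by simp
  have "(\<lambda>x. if x \<in> A then h x else 0) \<in> L ` supp A"
    using inj_surj_supp[OF A add hom into inj] hs by (rule subsetD)
  then obtain f where f0: "(\<lambda>x. if x \<in> A then h x else 0) = L f" "f \<in> supp A"
    by (rule imageE)
  have f: "L f = (\<lambda>x. if x \<in> A then h x else 0)" using f0(1) by (rule sym)
  have "lop w f x = h x" if x: "x \<in> A" for x
  proof -
    have "L f x = h x" using f x by simp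
    then show ?thesis using x unfolding L_def by simp
  qed
  then show ?thesis by blast
qed

end


context wg begin

lemma gball_fin: "finite (gball w x0 n)" by (induction n) (auto simp: fin)

lemma gball_mono: "m \<le> n \<Longrightarrow> gball w x0 m \<subseteq> gball w x0 n"
  by (rule lift_Suc_mono_le[of "gball w x0"]) auto

lemma gball_reach: "x \<in> gball w x0 n \<Longrightarrow> reachable w x0 x"
proof (induction n arbitrary: x)
  case 0 then show ?case by (simp add: reachable_def)
next
  case (Suc n) then show ?case using reach_step by auto
qed

lemma reach_gball: "reachable w x0 y \<Longrightarrow> \<exists>n. y \<in> gball w x0 n"
  unfolding reachable_def
proof (induction rule: rtranclp_induct)
  case base then show ?case by (intro exI[of _ 0]) simp
next
  case (step y z)
  then obtain n where "y \<in> gball w x0 n" by blast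
  then have "z \<in> gball w x0 (Suc n)" using step adj_nb by auto
  then show ?case by blast
qed

lemma comp_solve:
  assumes inf: "infinite (component w x0)"
  shows "\<exists>f. \<forall>x\<in>component w x0. lop w f x = h x"
proof -
  define A where "A n = gball w x0 n" for n
  define B where "B n = gball w x0 (Suc n)" for n
  define S where "S n = {f. \<forall>x\<in>A n. lop w f x = h x}" for n
  define K where "K n = {f. \<forall>x\<in>A n. lop w f x = 0}" for n
  define R where "R k f = (\<lambda>x. if x \<in> B k then f x else (0::real))" for k f
  have Afin: "finite (A n)" for n unfolding A_def by (rule gball_fin)
  have Bfin: "finite (B n)" for n unfolding B_def by (rule gball_fin)
  have Amono: "m \<le> n \<Longrightarrow> A m \<subseteq> A n" for m n unfolding A_def by (rule gball_mono)
  have Bmono: "m \<le> n \<Longrightarrow> B m \<subseteq> B n" for m n unfolding B_def by (rule gball_mono) simp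
  have esc: "\<forall>a\<in>A n. \<exists>z. z \<notin> A n \<and> reachable w a z" for n
  proof
    fix a assume a: "a \<in> A n"
    have "\<not> component w x0 \<subseteq> A n" using inf Afin finite_subset by blast
    then obtain z where z: "z \<in> component w x0" "z \<notin> A n" by blast
    have "reachable w a z"
      using reach_trans[OF reach_sym[OF gball_reach[OF a[unfolded A_def]]]] z
      by (simp add: component_def)
    with z show "\<exists>z. z \<notin> A n \<and> reachable w a z" by blast
  qed
  have Sne: "\<exists>s. s \<in> S n" for n
    using finite_solve[OF Afin esc, of n h] by (simp add: S_def)
  have Smono: "m \<le> n \<Longrightarrow> S n \<subseteq> S m" for m n using Amono by (auto simp: S_def)
  have Kmono: "m \<le> n \<Longrightarrow> K n \<subseteq> K m" for m n using Amono by (auto simp: K_def)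
  have AB: "x \<in> A k \<Longrightarrow> y \<in> insert x (neighbors w x) \<Longrightarrow> y \<in> B k" for x y k
    by (auto simp: A_def B_def)
  have Rloc: "x \<in> A k \<Longrightarrow> lop w (R k f) x = lop w f x" for x k f
    by (rule lop_local) (auto simp: R_def dest: AB)
  have Radd: "R k (f + g) = R k f + R k g" for k f g by (auto simp: R_def fun_eq_iff)
  have Rdiff: "R k (f - g) = R k f - R k g" for k f g by (auto simp: R_def fun_eq_iff)
  have RR: "k \<le> j \<Longrightarrow> R k (R j f) = R k f" for k j f
    using Bmono by (auto simp: R_def fun_eq_iff)
  define J where "J k n = R k ` K n" for k n
  have Jsub: "V.subspace (J k n)" for k n
    unfolding V.subspace_def J_def
  proof (intro conjI ballI allI)
    show "0 \<in> R k ` K n"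
      by (rule image_eqI[of _ _ 0]) (auto simp: R_def K_def lop_zero fun_eq_iff)
  next
    fix a b assume "a \<in> R k ` K n" "b \<in> R k ` K n"
    then obtain p q where "p \<in> K n" "q \<in> K n" "a = R k p" "b = R k q" by blast
    then show "a + b \<in> R k ` K n"
      by (intro image_eqI[of _ _ "p + q"]) (auto simp: K_def lop_add Radd)
  next
    fix c a assume "a \<in> R k ` K n"
    then obtain p where "p \<in> K n" "a = R k p" by blast
    then show "scl c a \<in> R k ` K n"
      by (intro image_eqI[of _ _ "scl c p"]) (auto simp: K_def lop_scl' R_def scl_def fun_eq_iff)
  qed
  have Jsupp: "J k n \<subseteq> supp (B k)" for k n by (auto simp: J_def R_def supp_def)
  have Jmono: "m \<le> n \<Longrightarrow> J k n \<subseteq> J k m" for k m n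
    using Kmono unfolding J_def by blast
  have "\<exists>N. \<forall>m\<ge>N. J k m = J k N" for k
    by (rule stabilize[OF Bfin Jsupp Jsub Jmono])
  then obtain N where N: "\<And>k m. N k \<le> m \<Longrightarrow> J k m = J k (N k)" by metis
  define G where "G k = {t. \<forall>m. \<exists>f\<in>S m. R k f = t}" for k
  have key: "R k s \<in> G k" if s: "s \<in> S (N k)" for k s
    unfolding G_def
  proof (intro CollectI allI)
    fix m
    show "\<exists>f\<in>S m. R k f = R k s"
    proof (cases "m \<le> N k")
      case True then show ?thesis using s Smono by blast
    next
      case False
      then have Nm: "N k \<le> m" by simp
      obtain sm where sm: "sm \<in> S m" using Sne by blast
      then have "sm \<in> S (N k)" using Smono Nm by blast
      then have "s - sm \<in> K (N k)" using s by (auto simp: S_def K_def lop_diff)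
      then have "R k (s - sm) \<in> J k m" using N[OF Nm] by (auto simp: J_def)
      then obtain q where q: "q \<in> K m" "R k q = R k (s - sm)" by (auto simp: J_def)
      have "sm + q \<in> S m" using sm q(1) by (auto simp: S_def K_def lop_add)
      moreover have "R k (sm + q) = R k s" using q(2) by (simp add: Radd Rdiff)
      ultimately show ?thesis by blast
    qed
  qed
  have G1: "\<exists>t. t \<in> G k" for k using Sne key by blast
  have G2: "\<exists>t'. t' \<in> G (Suc k) \<and> R k t' = t" if t: "t \<in> G k" for k t
  proof -
    define M where "M = max (N k) (N (Suc k))"
    obtain f where f: "f \<in> S M" "R k f = t" using t by (auto simp: G_def)
    have "f \<in> S (N (Suc k))" using f(1) Smono[of "N (Suc k)" M] by (auto simp: M_def)
    then have "R (Suc k) f \<in> G (Suc k)" by (rule key)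
    moreover have "R k (R (Suc k) f) = t" using RR f by simp
    ultimately show ?thesis by blast
  qed
  define ts where "ts = rec_nat (SOME t. t \<in> G 0) (\<lambda>k t. SOME t'. t' \<in> G (Suc k) \<and> R k t' = t)"
  have ts0: "ts 0 = (SOME t. t \<in> G 0)" by (simp add: ts_def)
  have tsS: "ts (Suc k) = (SOME t'. t' \<in> G (Suc k) \<and> R k t' = ts k)" for k by (simp add: ts_def)
  have tsG: "ts k \<in> G k" for k
  proof (induction k)
    case 0 then show ?case unfolding ts0 using G1 by (metis someI_ex)
  next
    case (Suc k)
    then show ?case unfolding tsS using someI_ex[OF G2[OF Suc]] by blast
  qed
  have tsR: "R k (ts (Suc k)) = ts k" for k
    unfolding tsS using someI_ex[OF G2[OF tsG[of k]]] by blast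
  have compat: "k \<le> j \<Longrightarrow> R k (ts j) = ts k" for k j
  proof (induction j rule: dec_induct)
    case base
    obtain f where "R k f = ts k" using tsG[of k] by (auto simp: G_def)
    then show ?case using RR[of k k f] by simp
  next
    case (step j)
    have "R k (ts (Suc j)) = R k (R j (ts (Suc j)))" using RR[OF step(1)] by simp
    also have "\<dots> = ts k" using tsR step by simp
    finally show ?case .
  qed
  define fs where "fs x = ts (LEAST k. x \<in> B k) x" for x
  have fsR: "R k fs = ts k" for k
  proof
    fix y
    show "R k fs y = ts k y"
    proof (cases "y \<in> B k")
      case True
      define j where "j = (LEAST k. y \<in> B k)"
      have jk: "j \<le> k" unfolding j_def using True by (rule Least_le)
      have yj: "y \<in> B j" unfolding j_def using True by (rule LeastI)
      have "fs y = ts j y" by (simp add: fs_def j_def)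
      also have "\<dots> = R j (ts k) y" using compat[OF jk] by simp
      also have "\<dots> = ts k y" using yj by (simp add: R_def)
      finally show ?thesis using True by (simp add: R_def)
    next
      case False
      have "ts k y = R k (ts k) y" using compat[of k k] by simp
      then show ?thesis using False by (simp add: R_def)
    qed
  qed
  have "\<forall>x\<in>component w x0. lop w fs x = h x"
  proof
    fix x assume "x \<in> component w x0"
    then obtain n where xn: "x \<in> A n" using reach_gball by (auto simp: component_def A_def)
    obtain f where f: "f \<in> S n" "R n f = ts n" using tsG[of n] by (auto simp: G_def)
    have "lop w fs x = lop w (R n fs) x" using Rloc[OF xn] by simp
    also have "\<dots> = lop w (R n f) x" using fsR f by simp
    also have "\<dots> = h x" using Rloc[OF xn, of f] f(1) xn by (simp add: S_def)
    finally show "lop w fs x = h x" .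
  qed
  then show ?thesis by blast
qed

end


theorem proposition1p5:
  fixes w :: "'a \<Rightarrow> 'a \<Rightarrow> real"
  assumes "weighted_graph w"
    and "locally_finite w"
    and "\<forall>x. neighbors w x \<noteq> {}"
  shows "(connected_graph w \<and> infinite (UNIV :: 'a set) \<longrightarrow> surj (laplacian w))
       \<and> (surj (laplacian w) \<longleftrightarrow> (\<forall>x. infinite (component w x)))"
proof -
  interpret wg w using assms by unfold_locales
  have surj_if: "surj (laplacian w)" if inf: "\<forall>x. infinite (component w x)"
  proof -
    have "\<exists>f. g = laplacian w f" for g :: "'a \<Rightarrow> real"
    proof -
      define h where "h x = deg w x * g x" for x
      define G where "G C = (SOME f. \<forall>x\<in>C. lop w f x = h x)" for C
      have GC: "\<forall>y\<in>component w x. lop w (G (component w x)) y = h y" for x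
      proof -
        have "\<exists>f. \<forall>y\<in>component w x. lop w f y = h y"
          by (rule comp_solve) (use inf in simp)
        then show ?thesis unfolding G_def by (rule someI_ex)
      qed
      define f where "f x = G (component w x) x" for x
      have "laplacian w f x = g x" for x
      proof -
        have x_in: "x \<in> component w x" by (simp add: component_def reachable_def)
        have "lop w f x = lop w (G (component w x)) x"
        proof (rule lop_local)
          fix y assume "y \<in> insert x (neighbors w x)"
          then show "f y = G (component w x) y"
          proof
            assume "y = x" then show ?thesis by (simp add: f_def)
          next
            assume "y \<in> neighbors w x"
            then have "component w y = component w x" by (rule comp_eq)
            then show ?thesis by (simp add: f_def)
          qed
        qed
        also have "\<dots> = h x" using GC x_in by blast
        finally have "lop w f x = deg w x * g x" by (simp add: h_def)
        then show ?thesis using lap_lop[of f x] deg_pos[of x] by simp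
      qed
      then have "g = laplacian w f" by (simp add: fun_eq_iff)
      then show ?thesis by blast
    qed
    then show ?thesis unfolding surj_def by blast
  qed
  have only_if: "infinite (component w x0)" if su: "surj (laplacian w)" for x0
  proof
    assume fin: "finite (component w x0)"
    define C where "C = component w x0"
    have finC: "finite C" using fin by (simp add: C_def)
    obtain f where f: "(\<lambda>x. 1) = laplacian w f" using surjD[OF su, of "\<lambda>x. 1"] by blast
    have lopf: "lop w f x = deg w x" for x
    proof -
      have "laplacian w f x = 1" using fun_cong[OF f, of x] by simp
      then show ?thesis using lap_lop[of f x] deg_pos[of x] by simp
    qed
    have NC: "neighbors w x \<subseteq> C" if "x \<in> C" for x
      using that reach_step by (auto simp: C_def component_def)
    have zero: "w x y = 0" if "y \<notin> neighbors w x" for x y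
      using that nb[of y x] wnn[of x y] by simp
    have sumN: "(\<Sum>y\<in>neighbors w x. w x y * f y) = (\<Sum>y\<in>C. w x y * f y)" if x: "x \<in> C" for x
      by (rule sum.mono_neutral_left[OF finC NC[OF x]]) (simp add: zero)
    have degC: "deg w x = (\<Sum>y\<in>C. w x y)" if x: "x \<in> C" for x
      unfolding deg_def by (rule sum.mono_neutral_left[OF finC NC[OF x]]) (simp add: zero)
    have "(\<Sum>x\<in>C. lop w f x) = (\<Sum>x\<in>C. deg w x * f x - (\<Sum>y\<in>C. w x y * f y))"
      by (rule sum.cong) (simp_all add: lop_def sumN)
    also have "\<dots> = (\<Sum>x\<in>C. deg w x * f x) - (\<Sum>x\<in>C. \<Sum>y\<in>C. w x y * f y)"
      by (simp add: sum_subtractf)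
    also have "(\<Sum>x\<in>C. \<Sum>y\<in>C. w x y * f y) = (\<Sum>y\<in>C. \<Sum>x\<in>C. w x y * f y)"
      by (rule sum.swap)
    also have "\<dots> = (\<Sum>y\<in>C. deg w y * f y)"
    proof (rule sum.cong)
      fix y assume y: "y \<in> C"
      have "(\<Sum>x\<in>C. w x y * f y) = (\<Sum>x\<in>C. w x y) * f y" by (simp add: sum_distrib_right)
      also have "(\<Sum>x\<in>C. w x y) = (\<Sum>x\<in>C. w y x)" by (rule sum.cong) (simp_all add: wsym[of _ y])
      also have "\<dots> = deg w y" using degC[OF y] by simp
      finally show "(\<Sum>x\<in>C. w x y * f y) = deg w y * f y" .
    qed simp
    finally have s0: "(\<Sum>x\<in>C. lop w f x) = 0" by simp
    have "x0 \<in> C" by (simp add: C_def component_def reachable_def)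
    then have "(\<Sum>x\<in>C. deg w x) > 0" using finC deg_pos by (intro sum_pos) auto
    with s0 show False by (simp add: lopf)
  qed
  have part1: "surj (laplacian w)" if "connected_graph w \<and> infinite (UNIV :: 'a set)"
  proof (rule surj_if, intro allI)
    fix x
    have "component w x = UNIV" using that by (auto simp: connected_graph_def component_def)
    then show "infinite (component w x)" using that by simp
  qed
  show ?thesis using part1 surj_if only_if by blast
qed


end
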